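(* Let $\Omega\subsetneq\mathbb{C}$ be a domain and $z_0\in\partial\Omega$ such that there is $\delta>0$ with $D(z_0,r)\cap\Omega$ connected for every $0<r\le\delta$. Then $U_1(\Omega,z_0)$ is a dense $G_\delta$ subset of $H(\Omega)$.
   Context: $H(\Omega)$ is the space of holomorphic functions on $\Omega$ with the topology of uniform convergence on compact subsets. $D(z_0,r)$ is the open disk of center $z_0$, radius $r$. $U_1(\Omega,z_0)$ is the set of $f\in H(\Omega)$ for which there exist no $r>0$ and no holomorphic $F:D(z_0,r)\to\mathbb{C}$ with $F=f$ on $\Omega\cap D(z_0,r)$. *)

theory Defs
  imports "HOL-Analysis.Analysis"
begin

text \<open>H(Omega): holomorphic functions on Omega (values outside Omega are irrelevant).\<close>
definition Hol :: "complex set \<Rightarrow> (complex \<Rightarrow> complex) set" where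
  "Hol \<Omega> = {f. f holomorphic_on \<Omega>}"

definition hol_open :: "complex set \<Rightarrow> (complex \<Rightarrow> complex) set \<Rightarrow> bool" where
  "hol_open \<Omega> U \<longleftrightarrow> U \<subseteq> Hol \<Omega> \<and>
     (\<forall>f\<in>U. \<exists>K e. compact K \<and> K \<subseteq> \<Omega> \<and> e > 0 \<and>
        {g \<in> Hol \<Omega>. \<forall>z\<in>K. cmod (g z - f z) < e} \<subseteq> U)"

definition hol_topology :: "complex set \<Rightarrow> (complex \<Rightarrow> complex) topology" where
  "hol_topology \<Omega> = topology (hol_open \<Omega>)"

lemma istopology_hol_open: "istopology (hol_open \<Omega>)"
  unfolding istopology_def
proof (intro conjI allI impI)
  fix S T assume S: "hol_open \<Omega> S" and T: "hol_open \<Omega> T"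
  show "hol_open \<Omega> (S \<inter> T)"
    unfolding hol_open_def
  proof (intro conjI ballI)
    show "S \<inter> T \<subseteq> Hol \<Omega>" using S unfolding hol_open_def by blast
  next
    fix f assume f: "f \<in> S \<inter> T"
    obtain K1 e1 where 1: "compact K1" "K1 \<subseteq> \<Omega>" "e1 > 0"
      "{g \<in> Hol \<Omega>. \<forall>z\<in>K1. cmod (g z - f z) < e1} \<subseteq> S"
      using S f unfolding hol_open_def by blast
    obtain K2 e2 where 2: "compact K2" "K2 \<subseteq> \<Omega>" "e2 > 0"
      "{g \<in> Hol \<Omega>. \<forall>z\<in>K2. cmod (g z - f z) < e2} \<subseteq> T"
      using T f unfolding hol_open_def by blast
    have "{g \<in> Hol \<Omega>. \<forall>z\<in>K1 \<union> K2. cmod (g z - f z) < min e1 e2} \<subseteq> S \<inter> T"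
      using 1(4) 2(4) by fastforce
    then show "\<exists>K e. compact K \<and> K \<subseteq> \<Omega> \<and> e > 0 \<and>
        {g \<in> Hol \<Omega>. \<forall>z\<in>K. cmod (g z - f z) < e} \<subseteq> S \<inter> T"
      using 1 2 by (intro exI[of _ "K1 \<union> K2"] exI[of _ "min e1 e2"]) auto
  qed
next
  fix \<K> assume "\<forall>K\<in>\<K>. hol_open \<Omega> K"
  then show "hol_open \<Omega> (\<Union>\<K>)" unfolding hol_open_def by (meson Union_iff Union_least subset_iff)
qed

lemma openin_hol_topology: "openin (hol_topology \<Omega>) U \<longleftrightarrow> hol_open \<Omega> U"
  unfolding hol_topology_def using istopology_hol_open by (simp add: topology_inverse')

definition U1 :: "complex set \<Rightarrow> complex \<Rightarrow> (complex \<Rightarrow> complex) set" where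
  "U1 \<Omega> z0 = {f \<in> Hol \<Omega>. \<not> (\<exists>r>0. \<exists>F. F holomorphic_on ball z0 r \<and>
                                   (\<forall>z \<in> \<Omega> \<inter> ball z0 r. F z = f z))}"

end

theory Submission
  imports Defs "HOL-Complex_Analysis.Complex_Analysis"
begin

lemma topspace_hol: "topspace (hol_topology \<Omega>) = Hol \<Omega>"
proof
  show "topspace (hol_topology \<Omega>) \<subseteq> Hol \<Omega>"
    by (metis openin_hol_topology hol_open_def openin_topspace)
  have "hol_open \<Omega> (Hol \<Omega>)" unfolding hol_open_def
    by (intro conjI ballI subset_refl exI[of _ "{}"] exI[of _ 1]) auto
  then show "Hol \<Omega> \<subseteq> topspace (hol_topology \<Omega>)"
    by (metis openin_hol_topology openin_subset)
qed

definition Aset where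
  "Aset \<Omega> z0 \<rho> (m::nat) = {f \<in> Hol \<Omega>. \<exists>F. F holomorphic_on ball z0 \<rho> \<and>
     (\<forall>z\<in>ball z0 \<rho>. cmod (F z) \<le> real m) \<and> (\<forall>z\<in>\<Omega> \<inter> ball z0 \<rho>. F z = f z)}"

lemma closed_A:
  assumes "open \<Omega>" "z0 \<in> closure \<Omega>" "0 < \<rho>" "connected (ball z0 \<rho> \<inter> \<Omega>)"
  shows "closedin (hol_topology \<Omega>) (Aset \<Omega> z0 \<rho> m)"
proof -
  define S where "S = \<Omega> \<inter> ball z0 \<rho>"
  have Sopen: "open S" using assms by (simp add: S_def open_Int)
  have Scon: "connected S" using assms(4) by (simp add: S_def Int_commute)
  have "S \<noteq> {}" using assms(2,3) unfolding S_def closure_approachable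
    by (metis dist_commute IntI empty_iff mem_ball)
  then obtain p where p: "p \<in> S" by blast
  obtain e where e: "e > 0" "ball p e \<subseteq> S" using Sopen p open_contains_ball by blast
  define q where "q i = p + of_real (e / (real i + 2))" for i :: nat
  have qd: "dist p (q i) = e / (real i + 2)" for i
  proof -
    have "dist p (q i) = norm (complex_of_real (e / (real i + 2)))"
      unfolding q_def dist_norm by (metis norm_minus_commute add_diff_cancel_left')
    also have "\<dots> = e / (real i + 2)" using e by (simp only: norm_of_real) simp
    finally show ?thesis .
  qed
  have qS: "q i \<in> S" for i
  proof -
    have "e / (real i + 2) < e" using e by (simp add: field_simps add_pos_nonneg)
    then show ?thesis using e qd[of i] by auto
  qed
  have qne: "q i \<noteq> p" for i using e qd[of i] by (metis dist_self divide_pos_pos less_irrefl of_nat_0_le_iff add_nonneg_pos zero_less_numeral)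
  have "(\<lambda>i. e / (real i + 2)) \<longlonglongrightarrow> 0"
    by real_asymp
  then have "(\<lambda>i. complex_of_real (e / (real i + 2))) \<longlonglongrightarrow> 0"
    using tendsto_of_real[where ?'a=complex] by fastforce
  then have "q \<longlonglongrightarrow> p + 0" unfolding q_def by (intro tendsto_add tendsto_const)
  then have "q \<longlonglongrightarrow> p" by simp
  then have plim: "p islimpt range q"
    unfolding islimpt_sequential using qne by auto
  show ?thesis
    unfolding closedin_def topspace_hol openin_hol_topology
  proof (intro conjI)
    show "Aset \<Omega> z0 \<rho> m \<subseteq> Hol \<Omega>" by (auto simp: Aset_def)
    show "hol_open \<Omega> (Hol \<Omega> - Aset \<Omega> z0 \<rho> m)" unfolding hol_open_def
    proof (intro conjI ballI)
      fix f assume f: "f \<in> Hol \<Omega> - Aset \<Omega> z0 \<rho> m"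
      show "\<exists>K e. compact K \<and> K \<subseteq> \<Omega> \<and> e > 0 \<and>
        {g \<in> Hol \<Omega>. \<forall>z\<in>K. cmod (g z - f z) < e} \<subseteq> Hol \<Omega> - Aset \<Omega> z0 \<rho> m"
      proof (rule ccontr)
        assume "\<not> ?thesis"
        then have H: "\<And>K e. compact K \<Longrightarrow> K \<subseteq> \<Omega> \<Longrightarrow> e > 0 \<Longrightarrow>
           \<exists>g. g \<in> Aset \<Omega> z0 \<rho> m \<and> (\<forall>z\<in>K. cmod (g z - f z) < e)"
          by blast
        have "\<exists>g. g \<in> Aset \<Omega> z0 \<rho> m \<and> (\<forall>z\<in>q ` {..j}. cmod (g z - f z) < 1 / (real j + 1))" for j
          by (rule H) (use qS S_def finite_imp_compact[of "q ` {..j}"] in auto)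
        then obtain g where g0: "\<And>j. g j \<in> Aset \<Omega> z0 \<rho> m \<and> (\<forall>z\<in>q ` {..j}. cmod (g j z - f z) < 1 / (real j + 1))"
          by metis
        then have g: "\<And>j. g j \<in> Aset \<Omega> z0 \<rho> m"
           "\<And>j i. i \<le> j \<Longrightarrow> cmod (g j (q i) - f (q i)) < 1 / (real j + 1)"
          by auto
        have "\<forall>j. \<exists>F. F holomorphic_on ball z0 \<rho> \<and>
           (\<forall>z\<in>ball z0 \<rho>. cmod (F z) \<le> real m) \<and> (\<forall>z\<in>S. F z = g j z)"
          using g(1) unfolding Aset_def S_def by blast
        then obtain F where F0: "\<And>j. F j holomorphic_on ball z0 \<rho> \<and>
           (\<forall>z\<in>ball z0 \<rho>. cmod (F j z) \<le> real m) \<and> (\<forall>z\<in>S. F j z = g j z)"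
          by metis
        then have F: "\<And>j. F j holomorphic_on ball z0 \<rho>"
          "\<And>j z. z \<in> ball z0 \<rho> \<Longrightarrow> cmod (F j z) \<le> real m"
          "\<And>j z. z \<in> S \<Longrightarrow> F j z = g j z"
          by auto
        obtain G r where G: "G holomorphic_on ball z0 \<rho>" "strict_mono (r :: nat \<Rightarrow> nat)"
          "\<And>x. x \<in> ball z0 \<rho> \<Longrightarrow> ((\<lambda>n. F (r n) x) \<longlongrightarrow> G x) sequentially"
        proof (rule Montel[of "ball z0 \<rho>" "{h. h holomorphic_on ball z0 \<rho> \<and> (\<forall>z\<in>ball z0 \<rho>. cmod (h z) \<le> real m)}" F])
          show "\<exists>B. \<forall>h\<in>{h. h holomorphic_on ball z0 \<rho> \<and> (\<forall>z\<in>ball z0 \<rho>. cmod (h z) \<le> real m)}. \<forall>z\<in>K. cmod (h z) \<le> B"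
            if "compact K" "K \<subseteq> ball z0 \<rho>" for K
            using that by (intro exI[of _ "real m"]) auto
        qed (use F in auto)
        have Gbd: "cmod (G z) \<le> real m" if "z \<in> ball z0 \<rho>" for z
        proof (rule tendsto_upperbound)
          show "((\<lambda>n. cmod (F (r n) z)) \<longlongrightarrow> cmod (G z)) sequentially"
            using G(3)[OF that] by (rule tendsto_norm)
        qed (use F(2) that in auto)
        have Gq: "G (q i) = f (q i)" for i
        proof (rule LIMSEQ_unique)
          show "(\<lambda>n. F (r n) (q i)) \<longlonglongrightarrow> G (q i)" using G(3) qS S_def by auto
          show "(\<lambda>n. F (r n) (q i)) \<longlonglongrightarrow> f (q i)"
          proof (rule LIMSEQ_I)
            fix \<epsilon> :: real assume "\<epsilon> > 0"
            obtain N where N: "1 / (real N + 1) < \<epsilon>"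
              using \<open>\<epsilon> > 0\<close> by (metis nat_approx_posE of_nat_Suc add.commute)
            show "\<exists>no. \<forall>n\<ge>no. norm (F (r n) (q i) - f (q i)) < \<epsilon>"
            proof (intro exI[of _ "N + i"] allI impI)
              fix n assume n: "n \<ge> N + i"
              have rn: "r n \<ge> n" using G(2) by (simp add: strict_mono_imp_increasing)
              have "norm (F (r n) (q i) - f (q i)) = norm (g (r n) (q i) - f (q i))"
                using F(3) qS by simp
              also have "\<dots> < 1 / (real (r n) + 1)" using g(2)[of i "r n"] n rn by simp
              also have "\<dots> \<le> 1 / (real N + 1)" using n rn by (simp add: frac_le)
              finally show "norm (F (r n) (q i) - f (q i)) < \<epsilon>" using N by simp
            qed
          qed
        qed
        have GS: "G z - f z = 0" if "z \<in> S" for z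
        proof (rule analytic_continuation[of "\<lambda>z. G z - f z" S "range q" p])
          show "(\<lambda>z. G z - f z) holomorphic_on S"
            using G(1) f unfolding Hol_def S_def
            by (intro holomorphic_intros) (auto elim: holomorphic_on_subset)
        qed (use Sopen Scon qS p plim Gq that in auto)
        have "f \<in> Aset \<Omega> z0 \<rho> m"
          unfolding Aset_def using f G(1) Gbd GS S_def by auto
        then show False using f by simp
      qed
    qed auto
  qed
qed


definition extd where
  "extd \<Omega> z0 f \<longleftrightarrow> (\<exists>r>0. \<exists>F. F holomorphic_on ball z0 r \<and> (\<forall>z \<in> \<Omega> \<inter> ball z0 r. F z = f z))"

lemma U1_extd: "U1 \<Omega> z0 = {f \<in> Hol \<Omega>. \<not> extd \<Omega> z0 f}"
  unfolding U1_def extd_def by simp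

lemma extd_lin:
  assumes "extd \<Omega> z0 f" "extd \<Omega> z0 g"
  shows "extd \<Omega> z0 (\<lambda>z. c * (f z - g z))"
proof -
  obtain r1 F1 where 1: "r1 > 0" "F1 holomorphic_on ball z0 r1" "\<forall>z \<in> \<Omega> \<inter> ball z0 r1. F1 z = f z"
    using assms(1) unfolding extd_def by blast
  obtain r2 F2 where 2: "r2 > 0" "F2 holomorphic_on ball z0 r2" "\<forall>z \<in> \<Omega> \<inter> ball z0 r2. F2 z = g z"
    using assms(2) unfolding extd_def by blast
  have "(\<lambda>z. c * (F1 z - F2 z)) holomorphic_on ball z0 (min r1 r2)"
    using 1(2) 2(2) by (intro holomorphic_intros) (auto elim: holomorphic_on_subset)
  then show ?thesis unfolding extd_def using 1 2
    by (intro exI[of _ "min r1 r2"] conjI exI[of _ "\<lambda>z. c * (F1 z - F2 z)"]) auto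
qed

lemma g0_U1:
  assumes "open \<Omega>" "z0 \<in> frontier \<Omega>"
  shows "(\<lambda>z. 1 / (z - z0)) \<in> U1 \<Omega> z0"
proof -
  have z0: "z0 \<notin> \<Omega>" using assms by (simp add: frontier_def interior_open)
  have cl: "z0 \<in> closure \<Omega>" using assms by (simp add: frontier_def)
  have hol: "(\<lambda>z. 1 / (z - z0)) \<in> Hol \<Omega>"
    unfolding Hol_def using z0 by (auto intro!: holomorphic_intros)
  have "\<not> extd \<Omega> z0 (\<lambda>z. 1 / (z - z0))"
  proof
    assume "extd \<Omega> z0 (\<lambda>z. 1 / (z - z0))"
    then obtain r F where rF: "r > 0" "F holomorphic_on ball z0 r"
       "\<And>z. z \<in> \<Omega> \<inter> ball z0 r \<Longrightarrow> F z = 1 / (z - z0)"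
      unfolding extd_def by blast
    have "continuous_on (ball z0 r) F" using rF(2) by (rule holomorphic_on_imp_continuous_on)
    then have "isCont F z0" using rF(1) by (simp add: continuous_on_eq_continuous_at)
    then obtain s where s: "s > 0" "\<And>z. dist z z0 < s \<Longrightarrow> dist (F z) (F z0) < 1"
      unfolding continuous_at_eps_delta by (metis zero_less_one)
    define M where "M = norm (F z0) + 1"
    have M: "M > 0" by (simp add: M_def add_nonneg_pos)
    obtain z where z: "z \<in> \<Omega>" "dist z z0 < min (min s r) (1 / M)"
      using cl M s rF(1) unfolding closure_approachable by (metis min_less_iff_conj divide_pos_pos zero_less_one)
    have zne: "z \<noteq> z0" using z z0 by auto
    have "F z = 1 / (z - z0)" using rF(3) z by (simp add: dist_commute)
    then have "norm (F z) = 1 / dist z z0" by (simp add: dist_norm norm_divide)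
    moreover have "1 / dist z z0 > M"
    proof -
      have "dist z z0 < 1 / M" using z by simp
      then have "dist z z0 * M < 1" using M by (simp add: field_simps)
      then show ?thesis using zne M by (simp add: field_simps)
    qed
    moreover have "norm (F z) < M"
      using s(2)[of z] z unfolding M_def dist_norm
      by (smt (verit) norm_triangle_ineq2)
    ultimately show False by simp
  qed
  then show ?thesis using hol U1_extd by blast
qed


lemma U1_Inter:
  assumes "\<delta> > 0"
  shows "U1 \<Omega> z0 = \<Inter> (range (\<lambda>(n,m). Hol \<Omega> - Aset \<Omega> z0 (\<delta> / real (Suc n)) m))"
proof (intro equalityI subsetI)
  fix f assume f: "f \<in> U1 \<Omega> z0"
  then have fH: "f \<in> Hol \<Omega>" and ne: "\<not> extd \<Omega> z0 f" by (auto simp: U1_extd)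
  have "f \<notin> Aset \<Omega> z0 (\<delta> / real (Suc n)) m" for n m
  proof
    assume "f \<in> Aset \<Omega> z0 (\<delta> / real (Suc n)) m"
    then have "extd \<Omega> z0 f" unfolding Aset_def extd_def using assms
      by (intro exI[of _ "\<delta> / real (Suc n)"]) auto
    then show False using ne by simp
  qed
  then show "f \<in> \<Inter> (range (\<lambda>(n,m). Hol \<Omega> - Aset \<Omega> z0 (\<delta> / real (Suc n)) m))"
    using fH by auto
next
  fix f assume f: "f \<in> \<Inter> (range (\<lambda>(n,m). Hol \<Omega> - Aset \<Omega> z0 (\<delta> / real (Suc n)) m))"
  then have fH: "f \<in> Hol \<Omega>" and nA: "\<And>n m. f \<notin> Aset \<Omega> z0 (\<delta> / real (Suc n)) m" by auto
  have "\<not> extd \<Omega> z0 f"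
  proof
    assume "extd \<Omega> z0 f"
    then obtain r F where rF: "r > 0" "F holomorphic_on ball z0 r"
       "\<And>z. z \<in> \<Omega> \<inter> ball z0 r \<Longrightarrow> F z = f z"
      unfolding extd_def by blast
    obtain n where n: "\<delta> / real (Suc n) < r"
    proof -
      obtain n where "inverse (real (Suc n)) < r / \<delta>" using rF(1) assms
        by (metis divide_pos_pos reals_Archimedean)
      then show ?thesis using that[of n] assms by (simp add: field_simps)
    qed
    define s where "s = \<delta> / real (Suc n)"
    have cs: "cball z0 s \<subseteq> ball z0 r" using n by (auto simp: s_def)
    have "continuous_on (cball z0 s) F"
      using rF(2) cs by (meson holomorphic_on_imp_continuous_on continuous_on_subset)
    then have "bounded (F ` cball z0 s)"
      by (intro compact_imp_bounded compact_continuous_image) auto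
    then obtain B where B: "\<And>z. z \<in> cball z0 s \<Longrightarrow> norm (F z) \<le> B"
      unfolding bounded_iff by blast
    have "f \<in> Aset \<Omega> z0 s (nat \<lceil>B\<rceil>)"
      unfolding Aset_def
    proof (intro CollectI conjI exI[of _ F] ballI)
      show "f \<in> Hol \<Omega>" by (rule fH)
      show "F holomorphic_on ball z0 s" using rF(2) cs by (meson ball_subset_cball holomorphic_on_subset subset_trans)
      show "cmod (F z) \<le> real (nat \<lceil>B\<rceil>)" if "z \<in> ball z0 s" for z
        using B[of z] that by (smt (verit) mem_ball mem_cball of_nat_nat real_nat_ceiling_ge)
      show "F z = f z" if "z \<in> \<Omega> \<inter> ball z0 s" for z
        using rF(3)[of z] that cs by (meson IntD1 IntD2 ball_subset_cball subsetD IntI)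
    qed
    then show False using nA s_def by blast
  qed
  then show "f \<in> U1 \<Omega> z0" using fH by (simp add: U1_extd)
qed

theorem theorem3p5:
  fixes \<Omega> :: "complex set" and z0 :: complex and \<delta> :: real
  assumes "open \<Omega>" and "connected \<Omega>" and "\<Omega> \<noteq> {}" and "\<Omega> \<noteq> UNIV"
    and "z0 \<in> frontier \<Omega>"
    and "\<delta> > 0"
    and "\<And>r. 0 < r \<Longrightarrow> r \<le> \<delta> \<Longrightarrow> connected (ball z0 r \<inter> \<Omega>)"
  shows "gdelta_in (hol_topology \<Omega>) (U1 \<Omega> z0) \<and>
         (hol_topology \<Omega>) closure_of (U1 \<Omega> z0) = topspace (hol_topology \<Omega>)"
proof
  have cl: "z0 \<in> closure \<Omega>" using assms(5) by (simp add: frontier_def)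
  have op: "openin (hol_topology \<Omega>) (Hol \<Omega> - Aset \<Omega> z0 (\<delta> / real (Suc n)) m)" for n m
  proof -
    have r: "0 < \<delta> / real (Suc n)" "\<delta> / real (Suc n) \<le> \<delta>"
      using assms(6) by (auto simp: field_simps)
    have "closedin (hol_topology \<Omega>) (Aset \<Omega> z0 (\<delta> / real (Suc n)) m)"
      by (rule closed_A) (use assms(1) cl r assms(7) in auto)
    then show ?thesis by (metis closedin_def topspace_hol)
  qed
  show "gdelta_in (hol_topology \<Omega>) (U1 \<Omega> z0)"
    unfolding U1_Inter[OF assms(6)]
    by (rule gdelta_in_Inter) (use op open_imp_gdelta_in in auto)
  show "(hol_topology \<Omega>) closure_of (U1 \<Omega> z0) = topspace (hol_topology \<Omega>)"
  proof (rule antisym)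
    show "hol_topology \<Omega> closure_of U1 \<Omega> z0 \<subseteq> topspace (hol_topology \<Omega>)"
      by (rule closure_of_subset_topspace)
    show "topspace (hol_topology \<Omega>) \<subseteq> hol_topology \<Omega> closure_of U1 \<Omega> z0"
    proof
      fix f assume f: "f \<in> topspace (hol_topology \<Omega>)"
      then have fH: "f \<in> Hol \<Omega>" by (simp add: topspace_hol)
      show "f \<in> hol_topology \<Omega> closure_of U1 \<Omega> z0"
        unfolding in_closure_of
      proof (intro conjI allI impI)
        show "f \<in> topspace (hol_topology \<Omega>)" by (rule f)
        fix T assume T: "f \<in> T \<and> openin (hol_topology \<Omega>) T"
        then obtain K e where Ke: "compact K" "K \<subseteq> \<Omega>" "e > 0"
          "{g \<in> Hol \<Omega>. \<forall>z\<in>K. cmod (g z - f z) < e} \<subseteq> T"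
          unfolding openin_hol_topology hol_open_def by blast
        define g0 where "g0 = (\<lambda>z. 1 / (z - z0))"
        have g0U: "g0 \<in> U1 \<Omega> z0" unfolding g0_def by (rule g0_U1[OF assms(1,5)])
        then have g0H: "g0 \<in> Hol \<Omega>" and g0n: "\<not> extd \<Omega> z0 g0" by (auto simp: U1_extd)
        have "continuous_on K g0"
          using g0H Ke(2) unfolding Hol_def
          by (metis mem_Collect_eq holomorphic_on_imp_continuous_on continuous_on_subset)
        then have "bounded (g0 ` K)" using Ke(1)
          by (intro compact_imp_bounded compact_continuous_image)
        then obtain B where B: "\<And>z. z \<in> K \<Longrightarrow> norm (g0 z) \<le> B"
          unfolding bounded_iff by blast
        define M where "M = \<bar>B\<bar> + 1"
        have M: "M > 0" by (simp add: M_def add_nonneg_pos)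
        define h where "h t = (\<lambda>z. f z + complex_of_real t * g0 z)" for t
        have hT: "h t \<in> T" if t: "0 < t" "t < e / M" for t
        proof -
          have "h t \<in> Hol \<Omega>" using fH g0H unfolding Hol_def h_def
            by (auto intro!: holomorphic_intros)
          moreover have "cmod (h t z - f z) < e" if z: "z \<in> K" for z
          proof -
            have "cmod (h t z - f z) = t * norm (g0 z)" using t by (simp add: h_def norm_mult)
            also have "\<dots> \<le> t * M" using B[OF z] t unfolding M_def
              by (intro mult_left_mono) auto
            also have "\<dots> < e" using t M by (simp add: field_simps)
            finally show ?thesis .
          qed
          ultimately show ?thesis using Ke(4) by blast
        qed
        define t1 where "t1 = e / (2 * M)"
        define t2 where "t2 = e / (3 * M)"
        have t: "0 < t1" "t1 < e / M" "0 < t2" "t2 < e / M" "t1 \<noteq> t2"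
          using Ke(3) M by (auto simp: t1_def t2_def field_simps)
        have "\<not> (extd \<Omega> z0 (h t1) \<and> extd \<Omega> z0 (h t2))"
        proof
          assume "extd \<Omega> z0 (h t1) \<and> extd \<Omega> z0 (h t2)"
          then have "extd \<Omega> z0 (\<lambda>z. (1 / complex_of_real (t1 - t2)) * (h t1 z - h t2 z))"
            by (intro extd_lin) auto
          moreover have "(\<lambda>z. (1 / complex_of_real (t1 - t2)) * (h t1 z - h t2 z)) = g0"
          proof
            fix z
            have "h t1 z - h t2 z = complex_of_real (t1 - t2) * g0 z"
              by (simp add: h_def algebra_simps)
            then show "(1 / complex_of_real (t1 - t2)) * (h t1 z - h t2 z) = g0 z"
              using t(5) by simp
          qed
          ultimately show False using g0n by simp
        qed
        moreover have "h t1 \<in> Hol \<Omega>" "h t2 \<in> Hol \<Omega>" using fH g0H unfolding Hol_def h_def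
          by (auto intro!: holomorphic_intros)
        ultimately have "h t1 \<in> U1 \<Omega> z0 \<or> h t2 \<in> U1 \<Omega> z0" by (auto simp: U1_extd)
        then show "\<exists>y. y \<in> U1 \<Omega> z0 \<and> y \<in> T" using hT t by blast
      qed
    qed
  qed
qed

end
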